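(* Let $k\ge1$ and $B>2$ be constants and let $(\alpha_L^*,\alpha_R^* )$ be the fixed point of $F$ (equivalently, the solution in $(1/2,1)^2$ of $\exp(B\sqrt k(1-2\alpha_R))=\frac{1-\alpha_L}{\alpha_L}$, $\exp(\frac{B}{\sqrt k}(1-2\alpha_L))=\frac{1-\alpha_R}{\alpha_R}$). Then $(1-\alpha_L^* )(1-\alpha_R^* )B^2<1$.
   Context: The map $F$: for $(\alpha_L,\alpha_R)\in[0,1]^2$, if $\sqrt{\alpha_L\alpha_R}\,B\le1$ set $(\theta_L,\theta_R)=(0,0)$; otherwise let $(\theta_L,\theta_R)$ be the unique solution with $\theta_L,\theta_R>0$ of $\exp(-B\sqrt k\,\alpha_R\theta_R)=1-\theta_L$ and $\exp(-\frac{B}{\sqrt k}\alpha_L\theta_L)=1-\theta_R$. Then $F(\alpha_L,\alpha_R)=\big(\tfrac12(1+\theta_L\alpha_L),\tfrac12(1+\theta_R\alpha_R)\big)$. *)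

theory Defs
  imports Complex_Main
begin

definition theta_sys :: "real \<Rightarrow> real \<Rightarrow> real \<Rightarrow> real \<Rightarrow> real \<times> real \<Rightarrow> bool" where
  "theta_sys k B aL aR t =
     (fst t > 0 \<and> snd t > 0 \<and>
      exp (- B * sqrt k * aR * snd t) = 1 - fst t \<and>
      exp (- (B / sqrt k) * aL * fst t) = 1 - snd t)"

definition thetas :: "real \<Rightarrow> real \<Rightarrow> real \<Rightarrow> real \<Rightarrow> real \<times> real" where
  "thetas k B aL aR =
     (if sqrt (aL * aR) * B \<le> 1 then (0, 0) else (THE t. theta_sys k B aL aR t))"

definition mapF :: "real \<Rightarrow> real \<Rightarrow> real \<times> real \<Rightarrow> real \<times> real" where
  "mapF k B a =
     (let aL = fst a; aR = snd a; t = thetas k B aL aR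
      in ((1 + fst t * aL) / 2, (1 + snd t * aR) / 2))"

end

theory Submission
  imports Defs
begin

lemma exp_strict: "(u::real) \<noteq> 0 \<Longrightarrow> 1 + u < exp u"
proof -
  assume u: "u \<noteq> 0"
  have "exp u = exp (u/2) * exp (u/2)" by (simp flip: exp_add)
  moreover have "1 + u/2 \<le> exp (u/2)" by (rule exp_ge_add_one_self)
  moreover have "u/2 > -1 \<or> u/2 \<le> -1" by auto
  ultimately show ?thesis
  proof -
    assume e: "exp u = exp (u/2) * exp (u/2)" and l: "1 + u/2 \<le> exp (u/2)"
    show ?thesis
    proof (cases "1 + u/2 \<ge> 0")
      case True
      then have "(1+u/2)*(1+u/2) \<le> exp (u/2) * exp (u/2)"
        using l by (intro mult_mono) auto
      moreover have uu: "u*u > 0" using u by (metis not_real_square_gt_zero)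
      moreover have "1 + u < (1+u/2)*(1+u/2)" using uu by (simp add: algebra_simps)
      ultimately show ?thesis using e by linarith
    next
      case False
      then have "1 + u < 0" by linarith
      then show ?thesis using exp_gt_zero[of u] by linarith
    qed
  qed
qed

definition phi :: "real \<Rightarrow> real" where "phi u = (1 - exp (-u)) / u"

lemma phi_pos: "u > 0 \<Longrightarrow> phi u > 0"
  unfolding phi_def by (simp add: divide_pos_pos)

lemma phi_eq: "u > 0 \<Longrightarrow> 1 - exp (-u) = u * phi u"
  unfolding phi_def by simp

lemma phi_decr: assumes "0 < a" "a < b" shows "phi b < phi a"
proof -
  have "phi b < phi a" 
  proof (rule DERIV_neg_imp_decreasing[OF assms(2)])
    fix x assume x: "a \<le> x" "x \<le> b"
    then have xp: "x > 0" using assms by auto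
    have d: "(phi has_real_derivative ((exp (-x) * x - (1 - exp (-x))) / (x*x))) (at x)"
      unfolding phi_def using xp
      by (auto intro!: derivative_eq_intros simp: power2_eq_square)
    have "1 + x < exp x" using xp exp_strict by auto
    then have "exp (-x) * (1 + x) < exp (-x) * exp x" by simp
    then have "exp (-x) * (1 + x) < 1" by (simp flip: exp_add)
    then have "(exp (-x) * x - (1 - exp (-x))) < 0" by (simp add: algebra_simps)
    then have "(exp (-x) * x - (1 - exp (-x))) / (x*x) < 0" using xp
      by (simp add: divide_neg_pos)
    then show "\<exists>y. (phi has_real_derivative y) (at x) \<and> y < 0" using d by blast
  qed
  then show ?thesis .
qed

lemma sys_unique:
  fixes p q :: real
  assumes p: "p > 0" and q: "q > 0" and pq: "p*q > 1"
  shows "\<exists>!t. fst t > 0 \<and> snd t > 0 \<and> exp (-p * snd t) = 1 - fst t \<and> exp (-q * fst t) = 1 - snd t"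
proof -
  define G where "G t = 1 - exp (-p * (1 - exp (-q * t))) - t" for t
  define e where "e = (p*q - 1) / (2*(q + p*q))"
  have e0: "e > 0" unfolding e_def using p q pq by (simp add: divide_pos_pos)
  have e1: "e < 1/2" unfolding e_def using p q pq by (simp add: field_simps)
  have lb: "1 - exp (-v) \<ge> v / (1 + v)" if "v \<ge> 0" for v :: real
  proof -
    have "1 + v \<le> exp v" by (rule exp_ge_add_one_self)
    then have "exp (-v) \<le> 1 / (1+v)" using that by (simp add: exp_minus field_simps)
    then show ?thesis using that by (simp add: field_simps)
  qed
  define w where "w = 1 - exp (-q*e)"
  have w: "w \<ge> q*e / (1 + q*e)" unfolding w_def using lb[of "q*e"] q e0 by simp
  have mono: "a / (1+a) \<le> b / (1+b)" if "0 \<le> a" "a \<le> b" for a b :: real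
    using that by (simp add: field_simps)
  have "p*w \<ge> p * (q*e/(1+q*e))" using w p by (intro mult_left_mono) auto
  also have "p * (q*e/(1+q*e)) = p*q*e/(1+q*e)" by simp
  finally have pw: "p*w \<ge> p*q*e/(1+q*e)" .
  have B1: "1 - exp (-(p*w)) \<ge> (p*w)/(1+p*w)" using lb[of "p*w"] pw p q e0
    by (smt (verit) divide_nonneg_pos mult_pos_pos)
  have B2: "(p*w)/(1+p*w) \<ge> (p*q*e/(1+q*e)) / (1 + p*q*e/(1+q*e))"
    using mono[OF _ pw] p q e0 by simp
  have B3: "(p*q*e/(1+q*e)) / (1 + p*q*e/(1+q*e)) = p*q*e / (1 + q*e + p*q*e)"
  proof -
    have n: "1 + q*e > 0" using q e0 by (smt (verit) mult_pos_pos)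
    have "1 + p*q*e/(1+q*e) = (1 + q*e + p*q*e)/(1+q*e)" using n by (simp add: field_simps)
    then show ?thesis using n by simp
  qed
  have A: "1 - exp (-(p*w)) \<ge> p*q*e / (1 + q*e + p*q*e)" using B1 B2 B3 by linarith
  have "p*q*e / (1 + q*e + p*q*e) > e"
  proof -
    have qq: "q + p*q > 0" using p q by (smt (verit) mult_pos_pos)
    have "e * (q + p*q) = (p*q - 1)/2" unfolding e_def using qq by (simp add: field_simps)
    then have "e * (q + p*q) < p*q - 1" using pq by simp
    then have "1 + q*e + p*q*e < p*q" by (simp add: algebra_simps)
    then have "e * (1 + q*e + p*q*e) < e * (p*q)" using e0 by (intro mult_strict_left_mono)
    then have "e * (1 + q*e + p*q*e) < p*q*e" by (simp add: algebra_simps)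
    moreover have "1 + q*e + p*q*e > 0" using p q e0 by (smt (verit) mult_pos_pos)
    ultimately show ?thesis by (simp add: pos_less_divide_eq algebra_simps)
  qed
  with A have Ge: "G e > 0" unfolding G_def w_def by simp
  have G1: "G 1 < 0" unfolding G_def by simp
  have cont: "continuous_on {e..1} G" unfolding G_def by (intro continuous_intros)
  obtain x where x: "x \<ge> e" "x \<le> 1" "G x = 0"
    using IVT2'[of G 1 0 e] Ge G1 cont e1 by force
  define y where "y = 1 - exp (-q*x)"
  have x0: "x > 0" using x e0 by simp
  have y0: "y > 0" unfolding y_def using x0 q by simp
  have ex: "fst (x,y) > 0 \<and> snd (x,y) > 0 \<and> exp (-p * snd (x,y)) = 1 - fst (x,y) \<and> exp (-q * fst (x,y)) = 1 - snd (x,y)"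
    using x0 y0 x(3) unfolding G_def y_def by simp
  show ?thesis
  proof (rule ex1I[of _ "(x,y)"])
    show "fst (x,y) > 0 \<and> snd (x,y) > 0 \<and> exp (-p * snd (x,y)) = 1 - fst (x,y) \<and> exp (-q * fst (x,y)) = 1 - snd (x,y)" by (rule ex)
  next
    have key: "False" if s: "s1 > 0" "s2 > 0" "exp (-p*s2) = 1 - s1" "exp (-q*s1) = 1 - s2"
      and t: "t1 > 0" "t2 > 0" "exp (-p*t2) = 1 - t1" "exp (-q*t1) = 1 - t2"
      and lt: "s1 < t1" for s1 s2 t1 t2
    proof -
      have "exp (-q*t1) < exp (-q*s1)" using lt q by simp
      then have lt2: "s2 < t2" using s t by linarith
      have e1: "s1 = p*s2 * phi (p*s2)" using phi_eq[of "p*s2"] s p by simp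
      have e2: "s2 = q*s1 * phi (q*s1)" using phi_eq[of "q*s1"] s q by simp
      have e3: "t1 = p*t2 * phi (p*t2)" using phi_eq[of "p*t2"] t p by simp
      have e4: "t2 = q*t1 * phi (q*t1)" using phi_eq[of "q*t1"] t q by simp
      have "s1 = p*q*phi (p*s2)*phi (q*s1) * s1" using e1 e2 by (simp add: algebra_simps)
      then have S: "p*q*phi (p*s2)*phi (q*s1) = 1" using s by simp
      have "t1 = p*q*phi (p*t2)*phi (q*t1) * t1" using e3 e4 by (simp add: algebra_simps)
      then have T: "p*q*phi (p*t2)*phi (q*t1) = 1" using t by simp
      have a: "phi (p*t2) < phi (p*s2)" using phi_decr[of "p*s2" "p*t2"] lt2 s p by simp
      have b: "phi (q*t1) < phi (q*s1)" using phi_decr[of "q*s1" "q*t1"] lt s q by simp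
      have a0: "phi (p*t2) > 0" using phi_pos t p by simp
      have b0: "phi (q*t1) > 0" using phi_pos t q by simp
      have "phi (p*t2) * phi (q*t1) < phi (p*s2) * phi (q*s1)"
        using a b a0 b0 by (intro mult_strict_mono) auto
      then have "p*q*(phi (p*t2) * phi (q*t1)) < p*q*(phi (p*s2) * phi (q*s1))"
        using p q by simp
      then show False using S T by (simp add: algebra_simps)
    qed
    fix t assume h: "fst t > 0 \<and> snd t > 0 \<and> exp (-p * snd t) = 1 - fst t \<and> exp (-q * fst t) = 1 - snd t"
    obtain a b where tab: "t = (a,b)" by force
    have "a = x"
    proof -
      have "\<not> a < x" using key[of a b x y] h ex tab by auto
      moreover have "\<not> x < a" using key[of x y a b] h ex tab by auto
      ultimately show ?thesis by simp
    qed
    then have "b = y" using h ex tab by auto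
    then show "t = (x,y)" using tab \<open>a = x\<close> by simp
  qed
qed

lemma ln_ineq: assumes "0 < x" "x < (1::real)" shows "ln (1+x) - ln (1-x) < 2*x/(1-x)"
proof -
  have a: "ln (1+x) \<le> x" using assms by (simp add: ln_add_one_self_le_self)
  have "ln (1/(1-x)) \<le> 1/(1-x) - 1" using assms by (intro ln_le_minus_one) simp
  then have b: "- ln (1-x) \<le> x/(1-x)" using assms by (simp add: ln_div field_simps)
  have c: "x < x/(1-x)" using assms by (simp add: field_simps)
  have "2*x/(1-x) = x/(1-x) + x/(1-x)" by (simp add: field_simps)
  then show ?thesis using a b c by linarith
qed

theorem mainTheorem15:
  fixes k B aL aR :: real
  assumes "k \<ge> 1" and "B > 2"
    and "aL \<in> {0..1}" and "aR \<in> {0..1}"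
    and "mapF k B (aL, aR) = (aL, aR)"
  shows "(1 - aL) * (1 - aR) * B\<^sup>2 < 1"
proof -
  define t where "t = thetas k B aL aR"
  have fL: "aL = (1 + fst t * aL)/2" and fR: "aR = (1 + snd t * aR)/2"
    using assms(5) unfolding mapF_def t_def Let_def by auto
  show ?thesis
  proof (cases "sqrt (aL * aR) * B \<le> 1")
    case True
    then have "t = (0,0)" unfolding t_def thetas_def by simp
    then have h1: "aL = 1/2" and h2: "aR = 1/2" using fL fR by auto
    have "aL*aR = (1/2)^2" by (simp only: h1 h2 power2_eq_square)
    then have sq: "sqrt (aL*aR) = 1/2" by (simp only: real_sqrt_abs)
    have "B/2 \<le> 1" using True unfolding sq by simp
    then show ?thesis using assms(2) by simp
  next
    case False
    then have big: "sqrt (aL*aR) * B > 1" by simp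
    have k0: "k > 0" "sqrt k > 0" using assms(1) by auto
    have "sqrt (aL*aR) > 0"
    proof (rule ccontr)
      assume "\<not> sqrt (aL*aR) > 0"
      then have "sqrt (aL*aR) * B \<le> 0" using assms(2) by (intro mult_nonpos_nonneg) auto
      then show False using big by simp
    qed
    then have prod: "aL * aR > 0" by simp
    have aL0: "aL > 0" and aR0: "aR > 0" using prod assms(3,4)
      by (auto simp: zero_less_mult_iff)
    define p where "p = B * sqrt k * aR"
    define q where "q = B / sqrt k * aL"
    have p0: "p > 0" unfolding p_def using aR0 k0 assms(2) by simp
    have q0: "q > 0" unfolding q_def using aL0 k0 assms(2) by simp
    have pqe: "p*q = B^2 * (aL*aR)" unfolding p_def q_def using k0
      by (simp add: field_simps power2_eq_square)
    have "(sqrt (aL*aR) * B)^2 > 1" using big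
      by (smt (verit) one_less_power zero_less_numeral)
    then have pq: "p*q > 1" using pqe prod by (simp add: power_mult_distrib algebra_simps)
    have sysiff: "theta_sys k B aL aR s = (fst s > 0 \<and> snd s > 0 \<and> exp (-p * snd s) = 1 - fst s \<and> exp (-q * fst s) = 1 - snd s)" for s
      unfolding theta_sys_def p_def q_def by (simp add: algebra_simps)
    have "\<exists>!s. theta_sys k B aL aR s" unfolding sysiff using sys_unique[OF p0 q0 pq] .
    then have "theta_sys k B aL aR (THE s. theta_sys k B aL aR s)" by (rule theI')
    then have ts: "theta_sys k B aL aR t" unfolding t_def thetas_def using False by simp
    define t1 where "t1 = fst t"
    define t2 where "t2 = snd t"
    have t1p: "t1 > 0" and t2p: "t2 > 0" and eq1: "exp (-p*t2) = 1 - t1" and eq2: "exp (-q*t1) = 1 - t2"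
      using ts unfolding sysiff t1_def t2_def by auto
    define x where "x = aL * t1"
    define y where "y = aR * t2"
    have t1l: "t1 < 1" using eq1 exp_gt_zero[of "-p*t2"] by linarith
    have t2l: "t2 < 1" using eq2 exp_gt_zero[of "-q*t1"] by linarith
    have x0: "x > 0" unfolding x_def using aL0 t1p by simp
    have y0: "y > 0" unfolding y_def using aR0 t2p by simp
    have x1: "x < 1"
    proof -
      have "aL*t1 \<le> 1*t1" using assms(3) t1p by (intro mult_right_mono) auto
      then show ?thesis unfolding x_def using t1l by simp
    qed
    have y1: "y < 1"
    proof -
      have "aR*t2 \<le> 1*t2" using assms(4) t2p by (intro mult_right_mono) auto
      then show ?thesis unfolding y_def using t2l by simp
    qed
    have aLx: "aL = (1+x)/2" using fL unfolding x_def t1_def by (simp add: algebra_simps)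
    have aRy: "aR = (1+y)/2" using fR unfolding y_def t2_def by (simp add: algebra_simps)
    have om1: "1 - t1 = (1-x)/(1+x)"
    proof -
      have "t1*(aL*2) = t1*(1 + t1*aL)" using fL unfolding t1_def by simp
      then have "(1-t1)*(1+x) = 1-x" unfolding x_def by (simp add: algebra_simps)
      then show ?thesis using x0 by (simp add: eq_divide_eq)
    qed
    have om2: "1 - t2 = (1-y)/(1+y)"
    proof -
      have "t2*(aR*2) = t2*(1 + t2*aR)" using fR unfolding t2_def by simp
      then have "(1-t2)*(1+y) = 1-y" unfolding y_def by (simp add: algebra_simps)
      then show ?thesis using y0 by (simp add: eq_divide_eq)
    qed
    define c where "c = B * sqrt k"
    define d where "d = B / sqrt k"
    have cy: "c*y = ln (1+x) - ln (1-x)"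
    proof -
      have l1: "ln (exp (-p*t2)) = -p*t2" by (rule ln_exp)
      have "p*t2 = - ln (1 - t1)" using l1 unfolding eq1 by simp
      also have "\<dots> = ln (1+x) - ln (1-x)" using om1 x0 x1 by (simp add: ln_div)
      finally have "p*t2 = ln (1+x) - ln (1-x)" .
      moreover have "p*t2 = c*y" unfolding p_def c_def y_def by simp
      ultimately show ?thesis by simp
    qed
    have dx: "d*x = ln (1+y) - ln (1-y)"
    proof -
      have l2: "ln (exp (-q*t1)) = -q*t1" by (rule ln_exp)
      have "q*t1 = - ln (1 - t2)" using l2 unfolding eq2 by simp
      also have "\<dots> = ln (1+y) - ln (1-y)" using om2 y0 y1 by (simp add: ln_div)
      finally have "q*t1 = ln (1+y) - ln (1-y)" .
      moreover have "q*t1 = d*x" unfolding q_def d_def x_def by simp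
      ultimately show ?thesis by simp
    qed
    have x1p: "1 - x > 0" using x1 by simp
    have y1p: "1 - y > 0" using y1 by simp
    have "c*y < 2*x/(1-x)" using ln_ineq[OF x0 x1] cy by simp
    then have I1: "c*y*(1-x) < 2*x" using x1p by (simp add: pos_less_divide_eq)
    have "d*x < 2*y/(1-y)" using ln_ineq[OF y0 y1] dx by simp
    then have I2: "d*x*(1-y) < 2*y" using y1p by (simp add: pos_less_divide_eq)
    have cp: "c > 0" unfolding c_def using assms(2) k0 by simp
    have dp: "d > 0" unfolding d_def using assms(2) k0 by simp
    have c0: "c*y*(1-x) > 0" using cp y0 x1p by simp
    have d0: "d*x*(1-y) > 0" using dp x0 y1p by simp
    have "(c*y*(1-x)) * (d*x*(1-y)) < (2*x)*(2*y)"
      using mult_strict_mono[OF I1 I2] c0 d0 x0 by simp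
    moreover have "(c*y*(1-x)) * (d*x*(1-y)) = (c*d*(1-x)*(1-y)) * (x*y)" by (simp only: ac_simps)
    moreover have "(2*x)*(2*y) = 4 * (x*y)" by simp
    ultimately have "(c*d*(1-x)*(1-y)) * (x*y) < 4 * (x*y)" by simp
    then have L: "c*d*(1-x)*(1-y) < 4" using x0 y0 by simp
    have cd: "c*d = B^2" unfolding c_def d_def using k0 by (simp add: power2_eq_square)
    have "(1 - aL) * (1 - aR) * B\<^sup>2 = c*d*(1-x)*(1-y) / 4" unfolding cd aLx aRy
      by (simp add: field_simps)
    then show ?thesis using L by simp
  qed
qed

end
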